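(* Let $v$ be the last installed view in the system, i.e., $lastview=v$. If a correct server $s$ requests to change view $v$ to view $v.succ$, then at least a weighted majority of correct servers, including $s$, eventually install $v.succ$.
   Context: System: servers $S=\{s_1,\dots,s_n\}$; reliable links, message passing; asynchronous; crash failures only (a server is correct if it does not crash); at most $f$ servers crash and $2f+1\le n$. Views form a sequence $v_0,v_1,\dots$ with $v_{k+1}=v_k.succ$; $v<w$ means $w$ is obtained from $v$ by applying $succ$ one or more times. Each server $s$ has a current view $s.cview$ (initially $v_0$) and a weight in each view; in every view each server's weight is strictly between $\mathbb{wl}=n/(2(n-f))$ and $\mathbb{wu}=n/(2f)$ and the total weight is at most $n$. A weighted majority for view $v$ is a set of servers whose weights in $v$ sum to more than $n/2$. View changer run by each server $s$ with $s.cview=v$: when a local timeout for $v$ expires it requests the change by sending $\langle\text{change\_view},v.succ\rangle$ to all servers; once it has received or sent change\_view for $v.succ$ it forwards it if not already sent, disables read/write operations, sends $\langle\text{state\_update},(val,ts,cid),v,w\rangle$ to all servers (its register state and weight $w$ in $v$) — at this point it has uninstalled $v$ — waits until it has state\_update messages for view $v$ whose weights sum to more than $n/2$, adopts the value with lexicographically largest $(ts,cid)$, then sets $s.cview\leftarrow v.succ$ (installs $v.succ$) and re-enables read/write operations. A view $v$ is installed in the system once at least one server installs $v$ and every server $s$ satisfies $s.cview\le v$; $lastview$ denotes the last view installed in the system. *)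

theory Defs
  imports Complex_Main
begin

text \<open>Model of the view changer. Servers are the naturals 0,...,n-1; views are
  naturals (view v_k is k, succ is Suc, and v < w is the order on nat).
  A register state is (val, ts, cid).\<close>

datatype 'val msg =
    ChangeView nat
  | StateUpdate "'val \<times> nat \<times> nat" nat real  \<comment> \<open>state_update, register state, view, weight\<close>

record 'val lstate =
  cview :: nat
  crashed :: bool
  ops_enabled :: bool
  reg :: "'val \<times> nat \<times> nat"
  cv_sent :: "nat set"
  cv_rcvd :: "nat set"
  su_sent :: "nat set"     \<comment> \<open>views for which state_update was sent (uninstalled views)\<close>
  su_rcvd :: "(nat \<times> ('val \<times> nat \<times> nat) \<times> nat \<times> real) set"
                           \<comment> \<open>received state_updates: (sender, register state, view, weight)\<close>

record 'val gstate =
  loc :: "nat \<Rightarrow> 'val lstate"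
  net :: "(nat \<times> nat \<times> 'val msg) set"   \<comment> \<open>messages in transit: (source, destination, msg)\<close>

datatype 'val event =
    Timeout nat | Deliver nat nat "'val msg" | Uninstall nat | Install nat
  | Op nat | Crash nat | Idle

definition send_all :: "nat \<Rightarrow> nat \<Rightarrow> 'val msg \<Rightarrow> (nat \<times> nat \<times> 'val msg) set" where
  "send_all n src m = {(src, d, m) | d. d < n}"

fun recv :: "nat \<Rightarrow> 'val msg \<Rightarrow> 'val lstate \<Rightarrow> 'val lstate" where
  "recv src (ChangeView u) l = l\<lparr>cv_rcvd := insert u (cv_rcvd l)\<rparr>"
| "recv src (StateUpdate r u wt) l = l\<lparr>su_rcvd := insert (src, r, u, wt) (su_rcvd l)\<rparr>"

fun lex_le :: "nat \<times> nat \<Rightarrow> nat \<times> nat \<Rightarrow> bool" where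
  "lex_le (a, b) (c, d) = (a < c \<or> (a = c \<and> b \<le> d))"

definition su_weight :: "'val lstate \<Rightarrow> nat \<Rightarrow> real" where
  "su_weight l v = (\<Sum>m \<in> {m \<in> su_rcvd l. fst (snd (snd m)) = v}. snd (snd (snd m)))"

fun step :: "nat \<Rightarrow> (nat \<Rightarrow> nat \<Rightarrow> real) \<Rightarrow> 'val gstate \<Rightarrow> 'val event \<Rightarrow> 'val gstate \<Rightarrow> bool" where
  "step n w g (Timeout s) g' =
     (let l = loc g s; v = cview l in
      s < n \<and> \<not> crashed l \<and>
      g' = g\<lparr>loc := (loc g)(s := l\<lparr>cv_sent := insert (Suc v) (cv_sent l)\<rparr>),
             net := net g \<union> send_all n s (ChangeView (Suc v))\<rparr>)"
| "step n w g (Deliver src dst m) g' =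
     ((src, dst, m) \<in> net g \<and>
      g' = g\<lparr>loc := (loc g)(dst := recv src m (loc g dst)), net := net g - {(src, dst, m)}\<rparr>)"
| "step n w g (Uninstall s) g' =
     (let l = loc g s; v = cview l in
      s < n \<and> \<not> crashed l \<and> Suc v \<in> cv_sent l \<union> cv_rcvd l \<and> v \<notin> su_sent l \<and>
      g' = g\<lparr>loc := (loc g)(s := l\<lparr>cv_sent := insert (Suc v) (cv_sent l), ops_enabled := False,
                                    su_sent := insert v (su_sent l)\<rparr>),
             net := net g \<union> (if Suc v \<in> cv_sent l then {} else send_all n s (ChangeView (Suc v)))
                          \<union> send_all n s (StateUpdate (reg l) v (w v s))\<rparr>)"
| "step n w g (Install s) g' =
     (let l = loc g s; v = cview l in
      s < n \<and> \<not> crashed l \<and> v \<in> su_sent l \<and> su_weight l v > real n / 2 \<and>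
      (\<exists>q r wt. (q, r, v, wt) \<in> su_rcvd l \<and>
         (\<forall>q' r' wt'. (q', r', v, wt') \<in> su_rcvd l \<longrightarrow> lex_le (snd r') (snd r)) \<and>
         g' = g\<lparr>loc := (loc g)(s := l\<lparr>cview := Suc v, ops_enabled := True, reg := r\<rparr>)\<rparr>))"
| "step n w g (Op s) g' =
     (let l = loc g s in
      s < n \<and> \<not> crashed l \<and> ops_enabled l \<and>
      (\<exists>r. g' = g\<lparr>loc := (loc g)(s := l\<lparr>reg := r\<rparr>)\<rparr>))"
| "step n w g (Crash s) g' =
     (s < n \<and> g' = g\<lparr>loc := (loc g)(s := (loc g s)\<lparr>crashed := True\<rparr>)\<rparr>)"
| "step n w g Idle g' = (g' = g)"

definition init_state :: "('val \<times> nat \<times> nat) \<Rightarrow> 'val gstate" where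
  "init_state r0 = \<lparr>loc = (\<lambda>q. \<lparr>cview = 0, crashed = False, ops_enabled = True, reg = r0,
       cv_sent = {}, cv_rcvd = {}, su_sent = {}, su_rcvd = {}\<rparr>), net = {}\<rparr>"

definition enabled :: "nat \<Rightarrow> (nat \<Rightarrow> nat \<Rightarrow> real) \<Rightarrow> 'val gstate \<Rightarrow> 'val event \<Rightarrow> bool" where
  "enabled n w g e = (\<exists>g'. step n w g e g')"

text \<open>An (infinite, asynchronous) execution: starts in the initial state, every step is a
  transition, reliable links (every message in transit to a non-crashing server is eventually
  delivered) and weak fairness for the local actions of the view changer.\<close>
definition correct :: "nat \<Rightarrow> (nat \<Rightarrow> 'val gstate) \<Rightarrow> nat \<Rightarrow> bool" where
  "correct n \<sigma> q = (q < n \<and> (\<forall>t. \<not> crashed (loc (\<sigma> t) q)))"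

definition execution :: "nat \<Rightarrow> (nat \<Rightarrow> nat \<Rightarrow> real) \<Rightarrow> ('val \<times> nat \<times> nat)
    \<Rightarrow> (nat \<Rightarrow> 'val gstate) \<Rightarrow> (nat \<Rightarrow> 'val event) \<Rightarrow> bool" where
  "execution n w r0 \<sigma> lab =
     (\<sigma> 0 = init_state r0 \<and>
      (\<forall>t. step n w (\<sigma> t) (lab t) (\<sigma> (Suc t))) \<and>
      (\<forall>t src dst m. (src, dst, m) \<in> net (\<sigma> t) \<and> correct n \<sigma> dst \<longrightarrow>
          (\<exists>t'\<ge>t. lab t' = Deliver src dst m)) \<and>
      (\<forall>s t0. (\<forall>t\<ge>t0. enabled n w (\<sigma> t) (Uninstall s)) \<longrightarrow> (\<exists>t\<ge>t0. lab t = Uninstall s)) \<and>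
      (\<forall>s t0. (\<forall>t\<ge>t0. enabled n w (\<sigma> t) (Install s)) \<longrightarrow> (\<exists>t\<ge>t0. lab t = Install s)))"

definition sys_installed :: "nat \<Rightarrow> 'val gstate \<Rightarrow> nat \<Rightarrow> bool" where
  "sys_installed n g v = ((\<exists>q<n. cview (loc g q) = v) \<and> (\<forall>q<n. cview (loc g q) \<le> v))"

end

theory Submission
  imports Defs "HOL-Library.Product_Lexorder"
begin

lemma step_mono:
  assumes "step n w g e g'"
  shows "cv_sent (loc g q) \<subseteq> cv_sent (loc g' q) \<and> cv_rcvd (loc g q) \<subseteq> cv_rcvd (loc g' q)
    \<and> su_sent (loc g q) \<subseteq> su_sent (loc g' q) \<and> su_rcvd (loc g q) \<subseteq> su_rcvd (loc g' q)
    \<and> (cview (loc g' q) = cview (loc g q) \<or> (e = Install q \<and> cview (loc g' q) = Suc (cview (loc g q))))"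
proof (cases e)
  case (Deliver src dst m)
  then show ?thesis using assms by (cases m) (auto)
qed (use assms in \<open>auto simp: Let_def split: if_splits\<close>)

lemma lex_le_iff: "lex_le a b \<longleftrightarrow> a \<le> b"
  by (cases a; cases b) auto

lemma lex_max:
  assumes "finite A" "A \<noteq> {}"
  shows "\<exists>a\<in>A. \<forall>b\<in>A. lex_le (f b) (f a)"
proof -
  let ?x = "Max (f ` A)"
  have "?x \<in> f ` A" using assms by simp
  then obtain a where a: "a \<in> A" "f a = ?x" by auto
  have "\<forall>b\<in>A. f b \<le> ?x" using assms by simp
  then show ?thesis using a by (intro bexI[of _ a]) (auto simp: lex_le_iff)
qed

locale ex =
  fixes n :: nat and w :: "nat \<Rightarrow> nat \<Rightarrow> real" and r0 :: "'val \<times> nat \<times> nat"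
    and \<sigma> :: "nat \<Rightarrow> 'val gstate" and lab :: "nat \<Rightarrow> 'val event"
  assumes exe: "execution n w r0 \<sigma> lab" and wnn: "\<And>u q. q < n \<Longrightarrow> 0 \<le> w u q"
begin

lemma init: "\<sigma> 0 = init_state r0" using exe by (simp add: execution_def)
lemma stp: "step n w (\<sigma> t) (lab t) (\<sigma> (Suc t))" using exe by (simp add: execution_def)

definition sentall :: "nat \<Rightarrow> 'val msg \<Rightarrow> bool" where
  "sentall src m = (\<forall>q<n. \<exists>t0. (src, q, m) \<in> net (\<sigma> t0))"

lemma sentall_I: "send_all n src m \<subseteq> net (\<sigma> t) \<Longrightarrow> sentall src m"
  unfolding sentall_def send_all_def by blast

definition inv :: "nat \<Rightarrow> bool" where
  "inv t = ((\<forall>src d m. (src,d,m) \<in> net (\<sigma> t) \<longrightarrow> (\<forall>r u wt. m = StateUpdate r u wt \<longrightarrow>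
        src < n \<and> wt = w u src \<and> sentall src m)) \<and>
     (\<forall>p. finite (su_rcvd (loc (\<sigma> t) p)) \<and>
       (\<forall>x\<in>cv_sent (loc (\<sigma> t) p). sentall p (ChangeView x)) \<and>
       (\<forall>u\<in>su_sent (loc (\<sigma> t) p). Suc u \<in> cv_sent (loc (\<sigma> t) p) \<and> p < n \<and>
            (\<exists>r. sentall p (StateUpdate r u (w u p)))) \<and>
       (\<forall>src r u wt. (src, r, u, wt) \<in> su_rcvd (loc (\<sigma> t) p) \<longrightarrow>
            src < n \<and> wt = w u src \<and> sentall src (StateUpdate r u wt))))"

lemma inv0: "inv 0"
  by (simp add: inv_def init init_state_def)

lemma inv_step: assumes "inv t" shows "inv (Suc t)"
proof -
  have st: "step n w (\<sigma> t) (lab t) (\<sigma> (Suc t))" by (rule stp)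
  show ?thesis
  proof (cases "lab t")
    case (Timeout s)
    let ?v = "cview (loc (\<sigma> t) s)"
    have N: "net (\<sigma> (Suc t)) = net (\<sigma> t) \<union> send_all n s (ChangeView (Suc ?v))"
     and L: "loc (\<sigma> (Suc t)) = (loc (\<sigma> t))(s := loc (\<sigma> t) s\<lparr>cv_sent := insert (Suc ?v) (cv_sent (loc (\<sigma> t) s))\<rparr>)"
      using st Timeout by (auto simp: Let_def)
    have "sentall s (ChangeView (Suc ?v))" by (rule sentall_I[of _ _ "Suc t"]) (simp add: N)
    then show ?thesis using assms unfolding inv_def N L by (auto simp: send_all_def)
  next
    case (Deliver src dst m)
    have N: "net (\<sigma> (Suc t)) = net (\<sigma> t) - {(src, dst, m)}"
     and L: "loc (\<sigma> (Suc t)) = (loc (\<sigma> t))(dst := recv src m (loc (\<sigma> t) dst))"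
     and M: "(src, dst, m) \<in> net (\<sigma> t)"
      using st Deliver by auto
    show ?thesis
    proof (cases m)
      case (ChangeView x1)
      then show ?thesis using assms unfolding inv_def N L by auto
    next
      case (StateUpdate r u wt)
      then show ?thesis using assms M unfolding inv_def N L by auto
    qed
  next
    case (Uninstall s)
    let ?l = "loc (\<sigma> t) s"
    let ?v = "cview ?l"
    have N: "net (\<sigma> (Suc t)) = net (\<sigma> t) \<union> (if Suc ?v \<in> cv_sent ?l then {} else send_all n s (ChangeView (Suc ?v)))
                          \<union> send_all n s (StateUpdate (reg ?l) ?v (w ?v s))"
     and L: "loc (\<sigma> (Suc t)) = (loc (\<sigma> t))(s := ?l\<lparr>cv_sent := insert (Suc ?v) (cv_sent ?l), ops_enabled := False,
                                    su_sent := insert ?v (su_sent ?l)\<rparr>)"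
     and sn: "s < n"
      using st Uninstall by (auto simp: Let_def)
    have s1: "sentall s (ChangeView (Suc ?v))"
    proof (cases "Suc ?v \<in> cv_sent ?l")
      case True then show ?thesis using assms unfolding inv_def by blast
    next
      case False then show ?thesis by (intro sentall_I[of _ _ "Suc t"]) (auto simp: N)
    qed
    have s2: "sentall s (StateUpdate (reg ?l) ?v (w ?v s))" by (rule sentall_I[of _ _ "Suc t"]) (auto simp: N)
    show ?thesis using assms s1 s2 sn unfolding inv_def N L by (auto simp: send_all_def) (metis s2 prod_cases3)
  next
    case (Install s)
    let ?l = "loc (\<sigma> t) s"
    obtain r where N: "net (\<sigma> (Suc t)) = net (\<sigma> t)"
     and L: "loc (\<sigma> (Suc t)) = (loc (\<sigma> t))(s := ?l\<lparr>cview := Suc (cview ?l), ops_enabled := True, reg := r\<rparr>)"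
      using st Install by (auto simp: Let_def)
    show ?thesis using assms unfolding inv_def N L by auto
  next
    case (Op s)
    let ?l = "loc (\<sigma> t) s"
    obtain r where N: "net (\<sigma> (Suc t)) = net (\<sigma> t)"
     and L: "loc (\<sigma> (Suc t)) = (loc (\<sigma> t))(s := ?l\<lparr>reg := r\<rparr>)"
      using st Op by (auto simp: Let_def)
    show ?thesis using assms unfolding inv_def N L by auto
  next
    case (Crash s)
    let ?l = "loc (\<sigma> t) s"
    have N: "net (\<sigma> (Suc t)) = net (\<sigma> t)"
     and L: "loc (\<sigma> (Suc t)) = (loc (\<sigma> t))(s := ?l\<lparr>crashed := True\<rparr>)"
      using st Crash by auto
    show ?thesis using assms unfolding inv_def N L by auto
  next
    case Idle
    then show ?thesis using assms st by (simp add: inv_def)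
  qed
qed

lemma inv_all: "inv t"
  by (induction t) (auto intro: inv0 inv_step)

end

context ex begin

lemma links: "(src, dst, m) \<in> net (\<sigma> t) \<Longrightarrow> correct n \<sigma> dst \<Longrightarrow> \<exists>t'\<ge>t. lab t' = Deliver src dst m"
  using exe unfolding execution_def by blast
lemma fairU: "(\<forall>t\<ge>t0. enabled n w (\<sigma> t) (Uninstall s)) \<Longrightarrow> \<exists>t\<ge>t0. lab t = Uninstall s"
  using exe unfolding execution_def by blast
lemma fairI: "(\<forall>t\<ge>t0. enabled n w (\<sigma> t) (Install s)) \<Longrightarrow> \<exists>t\<ge>t0. lab t = Install s"
  using exe unfolding execution_def by blast

lemma mono1: "cv_sent (loc (\<sigma> t) q) \<subseteq> cv_sent (loc (\<sigma> (Suc t)) q) \<and> cv_rcvd (loc (\<sigma> t) q) \<subseteq> cv_rcvd (loc (\<sigma> (Suc t)) q)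
    \<and> su_sent (loc (\<sigma> t) q) \<subseteq> su_sent (loc (\<sigma> (Suc t)) q) \<and> su_rcvd (loc (\<sigma> t) q) \<subseteq> su_rcvd (loc (\<sigma> (Suc t)) q)
    \<and> (cview (loc (\<sigma> (Suc t)) q) = cview (loc (\<sigma> t) q) \<or> (lab t = Install q \<and> cview (loc (\<sigma> (Suc t)) q) = Suc (cview (loc (\<sigma> t) q))))"
  using step_mono[OF stp] by blast

lemma mono_cvr: "t \<le> t' \<Longrightarrow> cv_rcvd (loc (\<sigma> t) q) \<subseteq> cv_rcvd (loc (\<sigma> t') q)"
  by (rule lift_Suc_mono_le[where f="\<lambda>t. cv_rcvd (loc (\<sigma> t) q)"]) (use mono1 in auto)
lemma mono_sus: "t \<le> t' \<Longrightarrow> su_sent (loc (\<sigma> t) q) \<subseteq> su_sent (loc (\<sigma> t') q)"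
  by (rule lift_Suc_mono_le[where f="\<lambda>t. su_sent (loc (\<sigma> t) q)"]) (use mono1 in auto)
lemma mono_sur: "t \<le> t' \<Longrightarrow> su_rcvd (loc (\<sigma> t) q) \<subseteq> su_rcvd (loc (\<sigma> t') q)"
  by (rule lift_Suc_mono_le[where f="\<lambda>t. su_rcvd (loc (\<sigma> t) q)"]) (use mono1 in auto)
lemma mono_cv: "t \<le> t' \<Longrightarrow> cview (loc (\<sigma> t) q) \<le> cview (loc (\<sigma> t') q)"
proof -
  have "\<And>k. cview (loc (\<sigma> k) q) \<le> cview (loc (\<sigma> (Suc k)) q)"
    using mono1 by (metis le_refl lessI less_imp_le)
  then show "t \<le> t' \<Longrightarrow> ?thesis" by (rule lift_Suc_mono_le)
qed

lemma inst_step: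
  assumes "lab c = Install p"
  shows "cview (loc (\<sigma> (Suc c)) p) = Suc (cview (loc (\<sigma> c) p)) \<and> cview (loc (\<sigma> c) p) \<in> su_sent (loc (\<sigma> c) p)
     \<and> su_weight (loc (\<sigma> c) p) (cview (loc (\<sigma> c) p)) > real n / 2"
  using stp[of c] assms by (auto simp: Let_def)

lemma inst_between:
  assumes "cview (loc (\<sigma> a) p) \<le> u" "u < cview (loc (\<sigma> b) p)"
  shows "\<exists>c. a \<le> c \<and> c < b \<and> cview (loc (\<sigma> c) p) = u \<and> lab c = Install p"
  using assms(2)
proof (induction b)
  case 0
  then show ?case using mono_cv[of 0 a p] assms(1) by simp
next
  case (Suc b)
  show ?case
  proof (cases "u < cview (loc (\<sigma> b) p)")
    case True
    then show ?thesis using Suc.IH by (meson less_SucI)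
  next
    case False
    have ab: "a \<le> b"
    proof (rule ccontr)
      assume "\<not> a \<le> b"
      then have "Suc b \<le> a" by simp
      then show False using mono_cv[of "Suc b" a p] assms(1) Suc.prems by simp
    qed
    from mono1[of b p] False Suc.prems have "lab b = Install p" "cview (loc (\<sigma> b) p) = u"
      by auto
    then show ?thesis using ab by auto
  qed
qed

lemma deliver_cv:
  assumes "correct n \<sigma> q" "sentall p (ChangeView x)"
  shows "\<exists>ta. x \<in> cv_rcvd (loc (\<sigma> ta) q)"
proof -
  have "q < n" using assms(1) by (simp add: correct_def)
  then obtain t0 where "(p, q, ChangeView x) \<in> net (\<sigma> t0)" using assms(2) by (auto simp: sentall_def)
  then obtain t' where "lab t' = Deliver p q (ChangeView x)" using links assms(1) by blast
  then have "x \<in> cv_rcvd (loc (\<sigma> (Suc t')) q)" using stp[of t'] by auto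
  then show ?thesis by blast
qed

lemma deliver_su:
  assumes "correct n \<sigma> q" "sentall p (StateUpdate r u wt)"
  shows "\<exists>ta. (p, r, u, wt) \<in> su_rcvd (loc (\<sigma> ta) q)"
proof -
  have "q < n" using assms(1) by (simp add: correct_def)
  then obtain t0 where "(p, q, StateUpdate r u wt) \<in> net (\<sigma> t0)" using assms(2) by (auto simp: sentall_def)
  then obtain t' where "lab t' = Deliver p q (StateUpdate r u wt)" using links assms(1) by blast
  then have "(p, r, u, wt) \<in> su_rcvd (loc (\<sigma> (Suc t')) q)" using stp[of t'] by auto
  then show ?thesis by blast
qed

lemma collect:
  assumes "finite S" "\<forall>m\<in>S. \<exists>t. m \<in> su_rcvd (loc (\<sigma> t) q)"
  shows "\<exists>T. S \<subseteq> su_rcvd (loc (\<sigma> T) q)"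
  using assms
proof (induction S rule: finite_induct)
  case empty
  then show ?case by auto
next
  case (insert x F)
  then obtain T1 where T1: "F \<subseteq> su_rcvd (loc (\<sigma> T1) q)" by auto
  obtain T2 where T2: "x \<in> su_rcvd (loc (\<sigma> T2) q)" using insert.prems by auto
  have "F \<subseteq> su_rcvd (loc (\<sigma> (max T1 T2)) q)" using T1 mono_sur[of T1 "max T1 T2" q] by auto
  moreover have "x \<in> su_rcvd (loc (\<sigma> (max T1 T2)) q)" using T2 mono_sur[of T2 "max T1 T2" q] by auto
  ultimately show ?case by blast
qed

end

context ex begin

lemma inv_fin: "finite (su_rcvd (loc (\<sigma> T) p))"
  using inv_all[of T] unfolding inv_def by blast
lemma inv_su: "(src, r, u, wt) \<in> su_rcvd (loc (\<sigma> T) p) \<Longrightarrow> src < n \<and> wt = w u src \<and> sentall src (StateUpdate r u wt)"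
  using inv_all[of T] unfolding inv_def by blast
lemma inv_cvs: "x \<in> cv_sent (loc (\<sigma> T) p) \<Longrightarrow> sentall p (ChangeView x)"
  using inv_all[of T] unfolding inv_def by blast
lemma inv_sus: "u \<in> su_sent (loc (\<sigma> T) p) \<Longrightarrow> Suc u \<in> cv_sent (loc (\<sigma> T) p) \<and> p < n \<and> (\<exists>r. sentall p (StateUpdate r u (w u p)))"
  using inv_all[of T] unfolding inv_def by blast

lemma uninst:
  assumes cq: "correct n \<sigma> q" and stuck: "\<forall>T\<ge>t1. cview (loc (\<sigma> T) q) = u"
    and cv: "Suc u \<in> cv_rcvd (loc (\<sigma> ta) q)"
  shows "\<exists>T1\<ge>t1. u \<in> su_sent (loc (\<sigma> T1) q)"
proof (rule ccontr)
  assume nu: "\<not> ?thesis"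
  have qn: "q < n" and nc: "\<And>T. \<not> crashed (loc (\<sigma> T) q)" using cq by (auto simp: correct_def)
  have "\<forall>T\<ge>max t1 ta. enabled n w (\<sigma> T) (Uninstall q)"
  proof (intro allI impI)
    fix T assume T: "max t1 ta \<le> T"
    have "Suc u \<in> cv_rcvd (loc (\<sigma> T) q)" using cv mono_cvr[of ta T q] T by auto
    moreover have "cview (loc (\<sigma> T) q) = u" using stuck T by auto
    moreover have "u \<notin> su_sent (loc (\<sigma> T) q)" using nu T by auto
    ultimately show "enabled n w (\<sigma> T) (Uninstall q)"
      using qn nc[of T] by (simp add: enabled_def Let_def)
  qed
  then obtain T where T: "T \<ge> max t1 ta" "lab T = Uninstall q" using fairU by blast
  have "cview (loc (\<sigma> T) q) = u" using stuck T by auto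
  then have "u \<in> su_sent (loc (\<sigma> (Suc T)) q)" using stp[of T] T(2) by (auto simp: Let_def)
  then show False using nu T(1) by (meson le_SucI max.boundedE)
qed

lemma progress:
  assumes cq: "correct n \<sigma> q" and c1: "cview (loc (\<sigma> t1) q) = u"
    and cv: "Suc u \<in> cv_rcvd (loc (\<sigma> ta) q)"
    and fS: "finite S" and vS: "\<forall>m\<in>S. fst (snd (snd m)) = u"
    and wS: "real n / 2 < sum (\<lambda>m. snd (snd (snd m))) S"
    and rS: "\<forall>m\<in>S. \<exists>t. m \<in> su_rcvd (loc (\<sigma> t) q)"
  shows "\<exists>t2\<ge>t1. cview (loc (\<sigma> t2) q) = Suc u"
proof (rule ccontr)
  assume nt: "\<not> ?thesis"
  have qn: "q < n" and nc: "\<And>T. \<not> crashed (loc (\<sigma> T) q)" using cq by (auto simp: correct_def)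
  have stuck: "\<forall>T\<ge>t1. cview (loc (\<sigma> T) q) = u"
  proof (intro allI impI)
    fix T assume T: "t1 \<le> T"
    have ge: "u \<le> cview (loc (\<sigma> T) q)" using mono_cv[OF T, of q] c1 by simp
    show "cview (loc (\<sigma> T) q) = u"
    proof (rule ccontr)
      assume "cview (loc (\<sigma> T) q) \<noteq> u"
      then have "u < cview (loc (\<sigma> T) q)" using ge by simp
      then obtain c where c: "t1 \<le> c" "cview (loc (\<sigma> c) q) = u" "lab c = Install q"
        using inst_between[of t1 q u T] c1 by auto
      then have "cview (loc (\<sigma> (Suc c)) q) = Suc u" using inst_step[of c q] by simp
      then show False using nt c(1) by (meson le_SucI)
    qed
  qed
  obtain T1 where T1: "T1 \<ge> t1" "u \<in> su_sent (loc (\<sigma> T1) q)" using uninst[OF cq stuck cv] by blast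
  obtain T2 where T2: "S \<subseteq> su_rcvd (loc (\<sigma> T2) q)" using collect[OF fS rS] by blast
  have Sne: "S \<noteq> {}" using wS by auto
  have "\<forall>T\<ge>max T1 T2. enabled n w (\<sigma> T) (Install q)"
  proof (intro allI impI)
    fix T assume T: "max T1 T2 \<le> T"
    let ?l = "loc (\<sigma> T) q"
    let ?A = "{m \<in> su_rcvd ?l. fst (snd (snd m)) = u}"
    have cvT: "cview ?l = u" using stuck T T1 by auto
    have ssT: "u \<in> su_sent ?l" using T1 mono_sus[of T1 T q] T by auto
    have SA: "S \<subseteq> ?A" using T2 mono_sur[of T2 T q] T vS by auto
    have finA: "finite ?A" using inv_fin[of T q] by simp
    have nn: "\<forall>m\<in>?A. 0 \<le> snd (snd (snd m))"
    proof
      fix m assume "m \<in> ?A"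
      then obtain src r uu wt where "m = (src, r, uu, wt)" "(src, r, uu, wt) \<in> su_rcvd ?l"
        by (cases m) auto
      then show "0 \<le> snd (snd (snd m))" using inv_su[of src r uu wt T q] wnn by simp
    qed
    have "sum (\<lambda>m. snd (snd (snd m))) S \<le> sum (\<lambda>m. snd (snd (snd m))) ?A"
      by (rule sum_mono2[OF finA SA]) (use nn in auto)
    then have wT: "su_weight ?l u > real n / 2" using wS by (simp add: su_weight_def)
    obtain a where a: "a \<in> ?A" "\<forall>b\<in>?A. lex_le (snd (fst (snd b))) (snd (fst (snd a)))"
      using lex_max[OF finA, of "\<lambda>m. snd (fst (snd m))"] SA Sne by blast
    obtain q0 r0' u0 wt0 where aa: "a = (q0, r0', u0, wt0)" by (cases a) auto
    have ex: "\<exists>q r wt. (q, r, u, wt) \<in> su_rcvd ?l \<and>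
         (\<forall>q' r' wt'. (q', r', u, wt') \<in> su_rcvd ?l \<longrightarrow> lex_le (snd r') (snd r))"
      apply (rule exI[of _ q0], rule exI[of _ r0'], rule exI[of _ wt0])
      using a aa by auto
    show "enabled n w (\<sigma> T) (Install q)"
      unfolding enabled_def
    proof (rule exI[of _ "(\<sigma> T)\<lparr>loc := (loc (\<sigma> T))(q := ?l\<lparr>cview := Suc (cview ?l), ops_enabled := True, reg := r0'\<rparr>)\<rparr>"])
      have 1: "(q0, r0', u, wt0) \<in> su_rcvd ?l" using a aa by auto
      have 2: "\<forall>q' r' wt'. (q', r', u, wt') \<in> su_rcvd ?l \<longrightarrow> lex_le (snd r') (snd r0')"
        using a aa by auto
      show "step n w (\<sigma> T) (Install q) ((\<sigma> T)\<lparr>loc := (loc (\<sigma> T))(q := ?l\<lparr>cview := Suc (cview ?l), ops_enabled := True, reg := r0'\<rparr>)\<rparr>)"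
        unfolding step.simps Let_def cvT
        using qn nc[of T] ssT wT 1 2 by blast
    qed
  qed
  then obtain T where T: "T \<ge> max T1 T2" "lab T = Install q" using fairI by blast
  have "cview (loc (\<sigma> (Suc T)) q) = Suc (cview (loc (\<sigma> T) q))" using inst_step[OF T(2)] by simp
  moreover have "cview (loc (\<sigma> T) q) = u" "cview (loc (\<sigma> (Suc T)) q) = u" using stuck T T1 by auto
  ultimately show False by simp
qed

end

theorem lemma5:
  fixes n f :: nat and w :: "nat \<Rightarrow> nat \<Rightarrow> real" and r0 :: "'val \<times> nat \<times> nat"
    and \<sigma> :: "nat \<Rightarrow> 'val gstate" and lab :: "nat \<Rightarrow> 'val event" and s v t :: nat
  assumes "2 * f + 1 \<le> n"
    and "\<forall>u. \<forall>q<n. real n / (2 * (real n - real f)) < w u q \<and> 2 * real f * w u q < real n"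
    and "\<forall>u. (\<Sum>q<n. w u q) \<le> real n"
    and "execution n w r0 \<sigma> lab"
    and "card {q. q < n \<and> (\<exists>t'. crashed (loc (\<sigma> t') q))} \<le> f"
    and "correct n \<sigma> s"
    and "sys_installed n (\<sigma> t) v"
    and "lab t = Timeout s" and "cview (loc (\<sigma> t) s) = v"
  shows "\<exists>M. M \<subseteq> {q. correct n \<sigma> q} \<and> s \<in> M \<and> (\<Sum>q\<in>M. w v q) > real n / 2 \<and>
             (\<forall>q\<in>M. \<exists>t'\<ge>t. cview (loc (\<sigma> t') q) = Suc v)"
proof -
  have nf: "real n - real f > 0" using assms(1) by simp
  have lb0: "0 \<le> real n / (2 * (real n - real f))" using nf by simp
  have wnn: "\<And>u q. q < n \<Longrightarrow> 0 \<le> w u q"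
  proof -
    fix u q assume "q < n"
    then have "real n / (2 * (real n - real f)) < w u q" using assms(2) by blast
    then show "0 \<le> w u q" using lb0 by linarith
  qed
  interpret E: ex n w r0 \<sigma> lab using assms(4) wnn by unfold_locales auto
  define C where "C = {q. correct n \<sigma> q}"
  have Cn: "C \<subseteq> {..<n}" by (auto simp: C_def correct_def)
  have finC: "finite C" using Cn finite_subset by blast
  have sC: "s \<in> C" using assms(6) by (simp add: C_def)
  define D where "D = {q. q < n \<and> (\<exists>t'. crashed (loc (\<sigma> t') q))}"
  have "{..<n} \<subseteq> C \<union> D" by (auto simp: C_def D_def correct_def)
  then have "card {..<n} \<le> card (C \<union> D)" by (rule card_mono[rotated]) (simp add: finC D_def)
  also have "\<dots> \<le> card C + card D" by (rule card_Un_le)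
  finally have "n \<le> card C + f" using assms(5) D_def by simp
  then have cardC: "real n - real f \<le> real (card C)" by simp
  have wsum: "(\<Sum>q\<in>C. w v q) > real n / 2"
  proof -
    have "(\<Sum>q\<in>C. real n / (2 * (real n - real f))) < (\<Sum>q\<in>C. w v q)"
      using finC sC Cn assms(2) by (intro sum_strict_mono) auto
    moreover have "(\<Sum>q\<in>C. real n / (2 * (real n - real f))) = real (card C) * (real n / (2 * (real n - real f)))"
      by simp
    moreover have "real (card C) * (real n / (2 * (real n - real f))) \<ge> (real n - real f) * (real n / (2 * (real n - real f)))"
      using cardC lb0 by (intro mult_right_mono) auto
    moreover have "(real n - real f) * (real n / (2 * (real n - real f))) = real n / 2"
      using nf by (simp add: field_simps)
    ultimately show ?thesis by linarith
  qed
  obtain p where pn: "p < n" and pv: "cview (loc (\<sigma> t) p) = v"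
    using assms(7) by (auto simp: sys_installed_def)
  have R: "\<forall>q\<in>C. \<exists>t1. cview (loc (\<sigma> t1) q) = u" if "u \<le> v" for u
    using that
  proof (induction u)
    case 0
    have "cview (loc (\<sigma> 0) q) = 0" for q by (simp add: E.init init_state_def)
    then show ?case by blast
  next
    case (Suc u)
    have init0: "cview (loc (\<sigma> 0) p) \<le> u" by (simp add: E.init init_state_def)
    obtain c where c: "cview (loc (\<sigma> c) p) = u" "lab c = Install p"
      using E.inst_between[OF init0, of t] pv Suc.prems by auto
    have ic: "u \<in> su_sent (loc (\<sigma> c) p)" "su_weight (loc (\<sigma> c) p) u > real n / 2"
      using E.inst_step[OF c(2)] c(1) by auto
    have sa: "E.sentall p (ChangeView (Suc u))"
      using E.inv_sus[OF ic(1)] E.inv_cvs by blast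
    define S where "S = {m \<in> su_rcvd (loc (\<sigma> c) p). fst (snd (snd m)) = u}"
    have fS: "finite S" using E.inv_fin[of c p] by (simp add: S_def)
    show ?case
    proof
      fix q assume qC: "q \<in> C"
      then have cq: "correct n \<sigma> q" by (simp add: C_def)
      obtain t1 where t1: "cview (loc (\<sigma> t1) q) = u" using Suc qC by auto
      obtain ta where ta: "Suc u \<in> cv_rcvd (loc (\<sigma> ta) q)" using E.deliver_cv[OF cq sa] by blast
      have rS: "\<forall>m\<in>S. \<exists>t. m \<in> su_rcvd (loc (\<sigma> t) q)"
      proof
        fix m assume "m \<in> S"
        then obtain src r uu wt where m: "m = (src, r, uu, wt)" "(src, r, uu, wt) \<in> su_rcvd (loc (\<sigma> c) p)"
          by (cases m) (auto simp: S_def)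
        then show "\<exists>t. m \<in> su_rcvd (loc (\<sigma> t) q)"
          using E.inv_su[OF m(2)] E.deliver_su[OF cq] by blast
      qed
      have "\<exists>t2\<ge>t1. cview (loc (\<sigma> t2) q) = Suc u"
        by (rule E.progress[OF cq t1 ta fS _ _ rS]) (use ic(2) in \<open>auto simp: S_def su_weight_def\<close>)
      then show "\<exists>t1. cview (loc (\<sigma> t1) q) = Suc u" by blast
    qed
  qed
  have saV: "E.sentall s (ChangeView (Suc v))"
    by (rule E.sentall_I[of _ _ "Suc t"]) (use E.stp[of t] assms(8,9) in \<open>auto simp: Let_def\<close>)
  have U: "\<exists>t2. v \<in> su_sent (loc (\<sigma> t2) q)" if qC: "q \<in> C" for q
  proof -
    have cq: "correct n \<sigma> q" using qC by (simp add: C_def)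
    obtain t1 where t1: "cview (loc (\<sigma> t1) q) = v" using R[of v] qC by auto
    obtain ta where ta: "Suc v \<in> cv_rcvd (loc (\<sigma> ta) q)" using E.deliver_cv[OF cq saV] by blast
    show ?thesis
    proof (cases "\<forall>T\<ge>t1. cview (loc (\<sigma> T) q) = v")
      case True
      then show ?thesis using E.uninst[OF cq True ta] by blast
    next
      case False
      then obtain T where T: "T \<ge> t1" "cview (loc (\<sigma> T) q) \<noteq> v" by blast
      then have "v < cview (loc (\<sigma> T) q)" using E.mono_cv[OF T(1), of q] t1 by simp
      then obtain c where "cview (loc (\<sigma> c) q) = v" "lab c = Install q"
        using E.inst_between[of t1 q v T] t1 by auto
      then show ?thesis using E.inst_step[of c q] by auto
    qed
  qed
  define rr where "rr q = (SOME r. E.sentall q (StateUpdate r v (w v q)))" for q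
  have rrs: "E.sentall q (StateUpdate (rr q) v (w v q))" if qC': "q \<in> C" for q
  proof -
    obtain t2 where "v \<in> su_sent (loc (\<sigma> t2) q)" using U[OF qC'] by blast
    then have "\<exists>r. E.sentall q (StateUpdate r v (w v q))" using E.inv_sus by blast
    then show ?thesis unfolding rr_def by (rule someI_ex)
  qed
  define S where "S = (\<lambda>q. (q, rr q, v, w v q)) ` C"
  have fS: "finite S" using finC by (simp add: S_def)
  have injS: "inj_on (\<lambda>q. (q, rr q, v, w v q)) C" by (auto simp: inj_on_def)
  have sumS: "sum (\<lambda>m. snd (snd (snd m))) S = (\<Sum>q\<in>C. w v q)"
    unfolding S_def by (simp add: sum.reindex[OF injS])
  have fin: "\<exists>t'\<ge>t. cview (loc (\<sigma> t') q) = Suc v" if qC: "q \<in> C" for q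
  proof -
    have cq: "correct n \<sigma> q" using qC by (simp add: C_def)
    then have qn: "q < n" by (simp add: correct_def)
    obtain t1 where t1: "cview (loc (\<sigma> t1) q) = v" using R[of v] qC by auto
    obtain ta where ta: "Suc v \<in> cv_rcvd (loc (\<sigma> ta) q)" using E.deliver_cv[OF cq saV] by blast
    have rS: "\<forall>m\<in>S. \<exists>t. m \<in> su_rcvd (loc (\<sigma> t) q)"
      unfolding S_def using rrs E.deliver_su[OF cq] by blast
    obtain t2 where t2: "cview (loc (\<sigma> t2) q) = Suc v"
      using E.progress[OF cq t1 ta fS _ _ rS] sumS wsum by (auto simp: S_def)
    have "t \<le> t2"
    proof (rule ccontr)
      assume "\<not> t \<le> t2"
      then have "cview (loc (\<sigma> t2) q) \<le> cview (loc (\<sigma> t) q)" using E.mono_cv[of t2 t q] by simp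
      moreover have "cview (loc (\<sigma> t) q) \<le> v" using assms(7) qn by (auto simp: sys_installed_def)
      ultimately show False using t2 by simp
    qed
    then show ?thesis using t2 by blast
  qed
  show ?thesis
    by (rule exI[of _ C]) (use sC wsum fin in \<open>auto simp: C_def\<close>)
qed

end
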